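(* Let $t>0$ and $\beta>1$. Then the function $h\mapsto\tilde l(t,\beta,h)$ is strictly convex and monotone decreasing on $(0,1]$, and \[ \tilde l_h(t,\beta,h)=\sqrt{1-\tilde\sigma^2(t,\beta,h)}+\tilde\sigma(t,\beta,h)-\sqrt2 . \]
   Context: For $t\ge 0$ let $q(t)=\lfloor t+1\rfloor/2$ if $\lfloor t\rfloor$ is odd and $q(t)=t-\lfloor t\rfloor/2$ if $\lfloor t\rfloor$ is even. For $0<h\le1$ let $p(t,h)=t+h-q(t)$. For $\beta>1$ let $\tilde\sigma(t,\beta,h)\in(0,1)$ be the unique solution $\sigma$ of $\frac{p(t,h)\sigma}{\sqrt{1-\sigma^2}}+\frac{q(t)\sigma}{\sqrt{\beta^2-\sigma^2}}=h$, and \[ \tilde l(t,\beta,h)=\frac{p(t,h)}{\sqrt{1-\tilde\sigma^2}}+\frac{\beta^2q(t)}{\sqrt{\beta^2-\tilde\sigma^2}}-t-h\sqrt2,\qquad\tilde\sigma=\tilde\sigma(t,\beta,h); \] $\tilde l_h$ denotes the partial derivative with respect to $h$. *)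

theory Defs
  imports "HOL-Analysis.Analysis"
begin

definition qfun :: "real \<Rightarrow> real" where
  "qfun t = (if odd \<lfloor>t\<rfloor> then real_of_int \<lfloor>t + 1\<rfloor> / 2
             else t - real_of_int \<lfloor>t\<rfloor> / 2)"

definition pfun :: "real \<Rightarrow> real \<Rightarrow> real" where
  "pfun t h = t + h - qfun t"

definition sigma_tilde :: "real \<Rightarrow> real \<Rightarrow> real \<Rightarrow> real" where
  "sigma_tilde t \<beta> h = (THE \<sigma>. 0 < \<sigma> \<and> \<sigma> < 1 \<and>
      pfun t h * \<sigma> / sqrt (1 - \<sigma>\<^sup>2) + qfun t * \<sigma> / sqrt (\<beta>\<^sup>2 - \<sigma>\<^sup>2) = h)"

definition l_tilde :: "real \<Rightarrow> real \<Rightarrow> real \<Rightarrow> real" where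
  "l_tilde t \<beta> h = (let \<sigma> = sigma_tilde t \<beta> h in
      pfun t h / sqrt (1 - \<sigma>\<^sup>2) + \<beta>\<^sup>2 * qfun t / sqrt (\<beta>\<^sup>2 - \<sigma>\<^sup>2) - t - h * sqrt 2)"

definition strict_convex_on :: "real set \<Rightarrow> (real \<Rightarrow> real) \<Rightarrow> bool" where
  "strict_convex_on S f \<longleftrightarrow> convex S \<and>
    (\<forall>x\<in>S. \<forall>y\<in>S. \<forall>u. x \<noteq> y \<and> 0 < u \<and> u < 1 \<longrightarrow>
       f (u * x + (1 - u) * y) < u * f x + (1 - u) * f y)"

end

theory Submission
  imports Defs
begin


lemma q_props:
  assumes "t > 0" shows "0 < qfun t" "qfun t \<le> t"
proof -
  have k0: "0 \<le> \<lfloor>t\<rfloor>" using assms by simp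
  have kt: "real_of_int \<lfloor>t\<rfloor> \<le> t" by simp
  have f1: "\<lfloor>t + 1\<rfloor> = \<lfloor>t\<rfloor> + 1" by simp
  have "0 < qfun t \<and> qfun t \<le> t"
  proof (cases "odd \<lfloor>t\<rfloor>")
    case True
    have "\<lfloor>t\<rfloor> \<noteq> 0" using True by auto
    then have "\<lfloor>t\<rfloor> \<ge> 1" using k0 by linarith
    then have "real_of_int \<lfloor>t\<rfloor> \<ge> 1" by linarith
    moreover have q2: "2 * qfun t = real_of_int \<lfloor>t\<rfloor> + 1" using True f1 by (simp add: qfun_def)
    ultimately show ?thesis using kt by linarith
  next
    case False
    have "qfun t = t - real_of_int \<lfloor>t\<rfloor> / 2" using False by (simp add: qfun_def)
    then show ?thesis using kt k0 assms by linarith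
  qed
  then show "0 < qfun t" "qfun t \<le> t" by auto
qed

lemma u_le: fixes x y c :: real
  assumes "0 \<le> x" "x \<le> y" "y\<^sup>2 < c"
  shows "x / sqrt (c - x\<^sup>2) \<le> y / sqrt (c - y\<^sup>2)"
proof -
  have x2: "x\<^sup>2 \<le> y\<^sup>2" using assms by (simp add: power_mono)
  have sy: "0 < sqrt (c - y\<^sup>2)" using assms by simp
  have "x\<^sup>2 < c" using x2 assms by linarith
  then have sx: "0 < sqrt (c - x\<^sup>2)" by simp
  have "sqrt (c - y\<^sup>2) \<le> sqrt (c - x\<^sup>2)" using x2 by simp
  then have "x / sqrt (c - x\<^sup>2) \<le> x / sqrt (c - y\<^sup>2)"
    using sy sx assms by (intro divide_left_mono) (auto intro!: mult_pos_pos)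
  also have "\<dots> \<le> y / sqrt (c - y\<^sup>2)" using sy assms by (intro divide_right_mono) auto
  finally show ?thesis .
qed

lemma u_less: fixes x y c :: real
  assumes "0 \<le> x" "x < y" "y\<^sup>2 < c"
  shows "x / sqrt (c - x\<^sup>2) < y / sqrt (c - y\<^sup>2)"
proof -
  have x2: "x\<^sup>2 \<le> y\<^sup>2" using assms by (simp add: power_mono)
  have sy: "0 < sqrt (c - y\<^sup>2)" using assms by simp
  have "x\<^sup>2 < c" using x2 assms by linarith
  then have sx: "0 < sqrt (c - x\<^sup>2)" by simp
  have "sqrt (c - y\<^sup>2) \<le> sqrt (c - x\<^sup>2)" using x2 by simp
  then have "x / sqrt (c - x\<^sup>2) \<le> x / sqrt (c - y\<^sup>2)"
    using sy sx assms by (intro divide_left_mono) (auto intro!: mult_pos_pos)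
  also have "\<dots> < y / sqrt (c - y\<^sup>2)" using sy assms by (intro divide_strict_right_mono) auto
  finally show ?thesis .
qed

lemma u_diff: fixes x y :: real
  assumes "0 \<le> x" "x \<le> y" "y < 1"
  shows "y - x \<le> y / sqrt (1 - y\<^sup>2) - x / sqrt (1 - x\<^sup>2)"
proof -
  have y2: "y\<^sup>2 < 1" using assms by (simp add: power_less_one_iff)
  have x2: "x\<^sup>2 \<le> y\<^sup>2" using assms by (simp add: power_mono)
  have sx: "0 < sqrt (1 - x\<^sup>2)" "sqrt (1 - x\<^sup>2) \<le> 1" using x2 y2 by auto
  have sy: "0 < sqrt (1 - y\<^sup>2)" using y2 by simp
  have sxy: "sqrt (1 - y\<^sup>2) \<le> sqrt (1 - x\<^sup>2)" using x2 by simp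
  have A: "1 \<le> 1 / sqrt (1 - x\<^sup>2)" using sx by simp
  have B: "1 / sqrt (1 - x\<^sup>2) \<le> 1 / sqrt (1 - y\<^sup>2)" using sy sxy by (intro divide_left_mono) auto
  have "x * (1 / sqrt (1 - x\<^sup>2) - 1) \<le> y * (1 / sqrt (1 - y\<^sup>2) - 1)"
    using A B assms by (intro mult_mono) auto
  then show ?thesis by (simp add: algebra_simps)
qed

lemma cs_ineq: fixes X x r s B :: real
  assumes "X\<^sup>2 = B - r\<^sup>2" "x\<^sup>2 = B - s\<^sup>2"
  shows "X * x + r * s \<le> B" and "r \<noteq> s \<Longrightarrow> X * x + r * s < B"
proof -
  have "0 \<le> (X - x)\<^sup>2" by simp
  then have 1: "2 * (X * x) \<le> X\<^sup>2 + x\<^sup>2" by (simp add: power2_eq_square algebra_simps)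
  have "0 \<le> (r - s)\<^sup>2" by simp
  then have 2: "2 * (r * s) \<le> r\<^sup>2 + s\<^sup>2" by (simp add: power2_eq_square algebra_simps)
  show "X * x + r * s \<le> B" using 1 2 assms by linarith
  assume "r \<noteq> s"
  then have "0 < (r - s)\<^sup>2" by simp
  then have "2 * (r * s) < r\<^sup>2 + s\<^sup>2" by (simp add: power2_eq_square algebra_simps)
  then show "X * x + r * s < B" using 1 assms by linarith
qed

lemma c_le: fixes r :: real assumes "0 \<le> r" "r \<le> 1"
  shows "sqrt (1 - r\<^sup>2) + r \<le> sqrt 2"
proof -
  have r2: "r\<^sup>2 \<le> 1" using assms by (simp add: power_le_one)
  have X: "(sqrt (1 - r\<^sup>2))\<^sup>2 = 1 - r\<^sup>2" using r2 by simp
  have "sqrt (1 - r\<^sup>2) * r + r * sqrt (1 - r\<^sup>2) \<le> 1"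
    using cs_ineq(1)[of "sqrt (1 - r\<^sup>2)" 1 r r "sqrt (1 - r\<^sup>2)"] X by auto
  then have "(sqrt (1 - r\<^sup>2) + r)\<^sup>2 \<le> 2" using X by (simp add: power2_eq_square algebra_simps)
  then show ?thesis by (simp add: real_le_rsqrt)
qed

lemma quot_bound: fixes D d c1 c2 w :: real
  assumes "d \<noteq> 0" "d * c1 \<le> D" "D \<le> d * c2"
  shows "\<bar>(D - d * w) / d - (c1 - w)\<bar> \<le> \<bar>c2 - c1\<bar>"
proof -
  have e: "(D - d * w) / d - (c1 - w) = (D - d * c1) / d" using assms(1) by (simp add: field_simps)
  have a: "0 \<le> D - d * c1" using assms by linarith
  have "D - d * c1 \<le> d * (c2 - c1)" using assms by (simp add: algebra_simps)
  also have "\<dots> \<le> \<bar>d\<bar> * \<bar>c2 - c1\<bar>" by (metis abs_ge_self abs_mult)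
  finally have "\<bar>D - d * c1\<bar> \<le> \<bar>d\<bar> * \<bar>c2 - c1\<bar>" using a by simp
  then have "\<bar>D - d * c1\<bar> / \<bar>d\<bar> \<le> \<bar>c2 - c1\<bar>" using assms(1) by (simp add: divide_le_eq mult.commute)
  then show ?thesis using e by (simp add: abs_divide)
qed

lemma convex_comb: fixes u x y P c :: real
  shows "u * (P + (x - (u * x + (1 - u) * y)) * c) + (1 - u) * (P + (y - (u * x + (1 - u) * y)) * c) = P"
  by (simp add: algebra_simps)

lemma convex_comb2: fixes u x y A B t w :: real
  shows "u * (A - t - x * w) + (1 - u) * (B - t - y * w) = u * A + (1 - u) * B - t - (u * x + (1 - u) * y) * w"
  by (simp add: algebra_simps)



context
  fixes t \<beta> :: real
  assumes qpos: "0 < qfun t" and qle: "qfun t \<le> t" and bgt: "1 < \<beta>"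
begin

abbreviation "sig h \<equiv> sigma_tilde t \<beta> h"
abbreviation "Ff h s \<equiv> pfun t h * s / sqrt (1 - s\<^sup>2) + qfun t * s / sqrt (\<beta>\<^sup>2 - s\<^sup>2)"
abbreviation "cc r \<equiv> sqrt (1 - r\<^sup>2) + r"
abbreviation "Mf h \<equiv> pfun t h / sqrt (1 - (sig h)\<^sup>2) + \<beta>\<^sup>2 * qfun t / sqrt (\<beta>\<^sup>2 - (sig h)\<^sup>2)"
abbreviation "Psi h r \<equiv> pfun t h * sqrt (1 - r\<^sup>2) + qfun t * sqrt (\<beta>\<^sup>2 - r\<^sup>2) + r * h"

lemma b2: "1 < \<beta>\<^sup>2" using bgt less_1_mult[OF bgt bgt] by (simp add: power2_eq_square)

lemma p_ge: "h \<le> pfun t h" using qle by (simp add: pfun_def)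

lemma sq_lt: fixes s :: real assumes "0 \<le> s" "s < 1" shows "s\<^sup>2 < 1" "s\<^sup>2 < \<beta>\<^sup>2"
proof -
  show "s\<^sup>2 < 1" using assms by (simp add: power_less_one_iff)
  then show "s\<^sup>2 < \<beta>\<^sup>2" using b2 by linarith
qed

lemma F_less:
  assumes "0 < h" "0 \<le> x" "x < y" "y < 1"
  shows "Ff h x < Ff h y"
proof -
  have p: "0 < pfun t h" using p_ge[of h] assms by linarith
  have y: "y\<^sup>2 < 1" "y\<^sup>2 < \<beta>\<^sup>2" using sq_lt[of y] assms by auto
  have "pfun t h * (x / sqrt (1 - x\<^sup>2)) < pfun t h * (y / sqrt (1 - y\<^sup>2))"
    using u_less[of x y 1] assms y p by (intro mult_strict_left_mono) auto
  moreover have "qfun t * (x / sqrt (\<beta>\<^sup>2 - x\<^sup>2)) \<le> qfun t * (y / sqrt (\<beta>\<^sup>2 - y\<^sup>2))"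
    using u_le[of x y "\<beta>\<^sup>2"] assms y qpos by (intro mult_left_mono) auto
  ultimately show ?thesis by simp
qed

lemma sig_ex1:
  assumes "0 < h" "h \<le> 1"
  shows "\<exists>!\<sigma>. 0 < \<sigma> \<and> \<sigma> < 1 \<and> Ff h \<sigma> = h"
proof -
  define r where "r = sqrt (1/2::real)"
  have r2: "r\<^sup>2 = 1/2" unfolding r_def by simp
  have r0: "0 < r" unfolding r_def by simp
  have "sqrt (1/2::real) < sqrt 1" by (rule real_sqrt_less_mono) simp
  then have r1: "r < 1" unfolding r_def by simp
  have sr: "sqrt (1 - r\<^sup>2) = r" using r2 r_def by simp
  have p: "h \<le> pfun t h" using p_ge .
  have "0 < qfun t * r / sqrt (\<beta>\<^sup>2 - r\<^sup>2)" using qpos r0 r2 b2 by simp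
  then have fr: "h \<le> Ff h r" using sr r0 p by simp
  have f0: "Ff h 0 \<le> h" using assms by simp
  have cont: "\<forall>x. 0 \<le> x \<and> x \<le> r \<longrightarrow> isCont (Ff h) x"
  proof (intro allI impI)
    fix x assume x: "0 \<le> x \<and> x \<le> r"
    then have "x < 1" using r1 by linarith
    then have "x\<^sup>2 < 1" "x\<^sup>2 < \<beta>\<^sup>2" using sq_lt x by auto
    then show "isCont (Ff h) x" by (intro continuous_intros) auto
  qed
  obtain x where x: "0 \<le> x" "x \<le> r" "Ff h x = h"
    using IVT[of "Ff h" 0 h r, OF f0 fr _ cont] r0 by auto
  have "x \<noteq> 0" using x assms by auto
  then have ex: "0 < x \<and> x < 1 \<and> Ff h x = h" using x r1 by auto
  show ?thesis
  proof (rule ex1I[of _ x])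
    show "0 < x \<and> x < 1 \<and> Ff h x = h" by fact
    fix y assume y: "0 < y \<and> y < 1 \<and> Ff h y = h"
    show "y = x"
    proof (rule ccontr)
      assume "y \<noteq> x"
      then consider "y < x" | "x < y" by linarith
      then show False
        using F_less[of h y x] F_less[of h x y] ex y assms by (cases, auto)
    qed
  qed
qed

lemma sig_props:
  assumes "0 < h" "h \<le> 1"
  shows "0 < sig h" "sig h < 1" "Ff h (sig h) = h" "(sig h)\<^sup>2 < 1/2"
proof -
  have th: "0 < sig h \<and> sig h < 1 \<and> Ff h (sig h) = h"
    unfolding sigma_tilde_def by (rule theI'[OF sig_ex1[OF assms]])
  then show 1: "0 < sig h" "sig h < 1" "Ff h (sig h) = h" by auto
  show "(sig h)\<^sup>2 < 1/2"
  proof (rule ccontr)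
    let ?s = "sig h"
    assume "\<not> ?s\<^sup>2 < 1/2"
    then have "1 - ?s\<^sup>2 \<le> ?s\<^sup>2" by simp
    then have "sqrt (1 - ?s\<^sup>2) \<le> ?s" using 1 by (metis real_sqrt_abs abs_of_pos real_sqrt_le_mono)
    moreover have "0 < sqrt (1 - ?s\<^sup>2)" using sq_lt[of ?s] 1 by auto
    ultimately have "1 \<le> ?s / sqrt (1 - ?s\<^sup>2)" by simp
    moreover have p: "0 < pfun t h" using p_ge[of h] assms by linarith
    ultimately have "pfun t h \<le> pfun t h * (?s / sqrt (1 - ?s\<^sup>2))"
      by (metis mult.right_neutral mult_left_mono less_imp_le)
    moreover have "0 < qfun t * ?s / sqrt (\<beta>\<^sup>2 - ?s\<^sup>2)" using qpos 1 sq_lt[of ?s] by simp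
    ultimately have "pfun t h < Ff h ?s" by simp
    then show False using 1 p_ge[of h] by simp
  qed
qed

lemma Psi_ident:
  assumes "0 < h" "h \<le> 1" "0 \<le> r" "r \<le> 1"
  shows "Mf h - Psi h r =
     pfun t h * (1 - sqrt (1 - r\<^sup>2) * sqrt (1 - (sig h)\<^sup>2) - r * sig h) / sqrt (1 - (sig h)\<^sup>2)
   + qfun t * (\<beta>\<^sup>2 - sqrt (\<beta>\<^sup>2 - r\<^sup>2) * sqrt (\<beta>\<^sup>2 - (sig h)\<^sup>2) - r * sig h) / sqrt (\<beta>\<^sup>2 - (sig h)\<^sup>2)"
proof -
  let ?s = "sig h"
  have s: "0 < ?s" "?s < 1" "Ff h ?s = h" using sig_props assms by auto
  have x: "0 < sqrt (1 - ?s\<^sup>2)" "0 < sqrt (\<beta>\<^sup>2 - ?s\<^sup>2)" using sq_lt[of ?s] s by auto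
  have "Psi h r = pfun t h * sqrt (1 - r\<^sup>2) + qfun t * sqrt (\<beta>\<^sup>2 - r\<^sup>2) + r * Ff h ?s"
    using s by simp
  then show ?thesis using x by (simp add: field_simps)
qed

lemma Psi_le:
  assumes "0 < h" "h \<le> 1" "0 \<le> r" "r \<le> 1"
  shows "Psi h r \<le> Mf h" and "r \<noteq> sig h \<Longrightarrow> Psi h r < Mf h"
proof -
  let ?s = "sig h"
  have s: "0 < ?s" "?s < 1" using sig_props assms by auto
  have x: "0 < sqrt (1 - ?s\<^sup>2)" "0 < sqrt (\<beta>\<^sup>2 - ?s\<^sup>2)" using sq_lt[of ?s] s by auto
  have r2: "r\<^sup>2 \<le> 1" using assms by (simp add: power_le_one)
  have X: "(sqrt (1 - r\<^sup>2))\<^sup>2 = 1 - r\<^sup>2" "(sqrt (\<beta>\<^sup>2 - r\<^sup>2))\<^sup>2 = \<beta>\<^sup>2 - r\<^sup>2"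
    using r2 b2 by auto
  have Y: "(sqrt (1 - ?s\<^sup>2))\<^sup>2 = 1 - ?s\<^sup>2" "(sqrt (\<beta>\<^sup>2 - ?s\<^sup>2))\<^sup>2 = \<beta>\<^sup>2 - ?s\<^sup>2"
    using x by auto
  have p: "0 < pfun t h" using p_ge[of h] assms by linarith
  note I = Psi_ident[OF assms]
  have c1: "sqrt (1 - r\<^sup>2) * sqrt (1 - ?s\<^sup>2) + r * ?s \<le> 1"
    by (rule cs_ineq(1)) (use X Y in auto)
  have c2: "sqrt (\<beta>\<^sup>2 - r\<^sup>2) * sqrt (\<beta>\<^sup>2 - ?s\<^sup>2) + r * ?s \<le> \<beta>\<^sup>2"
    by (rule cs_ineq(1)) (use X Y in auto)
  have t1: "0 \<le> pfun t h * (1 - sqrt (1 - r\<^sup>2) * sqrt (1 - ?s\<^sup>2) - r * ?s) / sqrt (1 - ?s\<^sup>2)"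
    using c1 p x by simp
  have t2: "0 \<le> qfun t * (\<beta>\<^sup>2 - sqrt (\<beta>\<^sup>2 - r\<^sup>2) * sqrt (\<beta>\<^sup>2 - ?s\<^sup>2) - r * ?s) / sqrt (\<beta>\<^sup>2 - ?s\<^sup>2)"
    using c2 qpos x by simp
  show "Psi h r \<le> Mf h" using I t1 t2 by linarith
  assume ne: "r \<noteq> ?s"
  have c1': "sqrt (1 - r\<^sup>2) * sqrt (1 - ?s\<^sup>2) + r * ?s < 1"
    by (rule cs_ineq(2)) (use X Y ne in auto)
  have "0 < pfun t h * (1 - sqrt (1 - r\<^sup>2) * sqrt (1 - ?s\<^sup>2) - r * ?s) / sqrt (1 - ?s\<^sup>2)"
    using c1' p x by simp
  then show "Psi h r < Mf h" using I t2 by linarith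
qed

lemma Psi_self: assumes "0 < h" "h \<le> 1" shows "Psi h (sig h) = Mf h"
proof -
  let ?s = "sig h"
  have s: "0 < ?s" "?s < 1" using sig_props assms by auto
  have x: "0 < sqrt (1 - ?s\<^sup>2)" "0 < sqrt (\<beta>\<^sup>2 - ?s\<^sup>2)" using sq_lt[of ?s] s by auto
  have Y: "sqrt (1 - ?s\<^sup>2) * sqrt (1 - ?s\<^sup>2) = 1 - ?s\<^sup>2"
          "sqrt (\<beta>\<^sup>2 - ?s\<^sup>2) * sqrt (\<beta>\<^sup>2 - ?s\<^sup>2) = \<beta>\<^sup>2 - ?s\<^sup>2"
    using x by (simp_all add: real_sqrt_mult_self)
  have "Mf h - Psi h ?s = 0"
    using Psi_ident[OF assms, of ?s] s Y by (simp add: power2_eq_square)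
  then show ?thesis by simp
qed

lemma Psi_shift: "Psi h' r = Psi h r + (h' - h) * cc r"
  by (simp add: pfun_def algebra_simps)

lemma Mf_bounds:
  assumes "0 < h" "h \<le> 1" "0 < h'" "h' \<le> 1"
  shows "(h' - h) * cc (sig h) \<le> Mf h' - Mf h" "Mf h' - Mf h \<le> (h' - h) * cc (sig h')"
proof -
  have s: "0 < sig h" "sig h < 1" "0 < sig h'" "sig h' < 1" using sig_props assms by auto
  have "Psi h' (sig h) \<le> Mf h'" using Psi_le(1)[of h' "sig h"] assms s by auto
  then show "(h' - h) * cc (sig h) \<le> Mf h' - Mf h"
    using Psi_shift[of h' "sig h" h] Psi_self[of h] assms by linarith
  have "Psi h (sig h') \<le> Mf h" using Psi_le(1)[of h "sig h'"] assms s by auto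
  moreover have "(h - h') * cc (sig h') = - ((h' - h) * cc (sig h'))"
    by (metis minus_diff_eq mult_minus_left)
  ultimately show "Mf h' - Mf h \<le> (h' - h) * cc (sig h')"
    using Psi_shift[of h "sig h'" h'] Psi_self[of h'] assms by linarith
qed

lemma sig_inj:
  assumes "0 < h" "h \<le> 1" "0 < h'" "h' \<le> 1" "sig h = sig h'"
  shows "h = h'"
proof -
  let ?s = "sig h"
  have s: "0 < ?s" "?s < 1" "?s\<^sup>2 < 1/2" using sig_props assms by auto
  have e1: "Ff h ?s = h" using sig_props(3)[OF assms(1,2)] by simp
  have e2: "Ff h' ?s = h'" using sig_props(3)[of h'] assms by simp
  have x: "0 < sqrt (1 - ?s\<^sup>2)" using sq_lt[of ?s] s by auto
  have "sqrt (?s\<^sup>2) < sqrt (1 - ?s\<^sup>2)" by (rule real_sqrt_less_mono) (use s in simp)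
  moreover have "sqrt (?s\<^sup>2) = ?s" using s by simp
  ultimately have "?s < sqrt (1 - ?s\<^sup>2)" by simp
  then have u: "?s / sqrt (1 - ?s\<^sup>2) < 1" using x by simp
  have d: "pfun t h' * ?s / sqrt (1 - ?s\<^sup>2) - pfun t h * ?s / sqrt (1 - ?s\<^sup>2) = (h' - h) * (?s / sqrt (1 - ?s\<^sup>2))"
    by (simp add: pfun_def diff_divide_distrib[symmetric] algebra_simps)
  have "h' - h = (h' - h) * (?s / sqrt (1 - ?s\<^sup>2))"
    using e1 e2 d by linarith
  then have z: "(h' - h) * (1 - ?s / sqrt (1 - ?s\<^sup>2)) = 0" by (simp add: algebra_simps)
  have "1 - ?s / sqrt (1 - ?s\<^sup>2) > 0" using u by linarith
  then have "1 - ?s / sqrt (1 - ?s\<^sup>2) \<noteq> 0" by linarith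
  then have "h' - h = 0" using z by (metis mult_eq_0_iff)
  then show ?thesis by simp
qed

lemma u_lt1: assumes "0 < h" "h \<le> 1"
  shows "sig h / sqrt (1 - (sig h)\<^sup>2) < 1"
proof -
  let ?s = "sig h"
  have s: "0 < ?s" "?s < 1" "?s\<^sup>2 < 1/2" using sig_props assms by auto
  have x: "0 < sqrt (1 - ?s\<^sup>2)" using s by (simp add: power_less_one_iff)
  have "sqrt (?s\<^sup>2) < sqrt (1 - ?s\<^sup>2)" by (rule real_sqrt_less_mono) (use s in simp)
  moreover have "sqrt (?s\<^sup>2) = ?s" using s by simp
  ultimately have "?s < sqrt (1 - ?s\<^sup>2)" by simp
  then show ?thesis using x by simp
qed

lemma sig_lip:
  assumes "0 < h" "h \<le> 1" "0 < h'" "h' \<le> 1"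
  shows "h * \<bar>sig h' - sig h\<bar> \<le> \<bar>h' - h\<bar>"
proof -
  note SP = sig_props
  define s where "s = sig h"
  define s' where "s' = sig h'"
  have s: "0 < s" "s < 1" "0 < s'" "s' < 1" using SP assms unfolding s_def s'_def by auto
  define us where "us = s / sqrt (1 - s\<^sup>2)"
  define us' where "us' = s' / sqrt (1 - s'\<^sup>2)"
  define vs where "vs = s / sqrt (\<beta>\<^sup>2 - s\<^sup>2)"
  define vs' where "vs' = s' / sqrt (\<beta>\<^sup>2 - s'\<^sup>2)"
  define p where "p = pfun t h"
  have pp: "pfun t h' = p + (h' - h)" unfolding p_def pfun_def by simp
  have p: "h \<le> p" unfolding p_def using p_ge .
  have e1: "p * us + qfun t * vs = h"
    using SP(3)[OF assms(1,2)] unfolding p_def us_def vs_def s_def by simp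
  have e2: "(p + (h' - h)) * us' + qfun t * vs' = h'"
    using SP(3)[OF assms(3,4)] unfolding pp[symmetric] us'_def vs'_def s'_def by simp
  have u1: "us' < 1" using u_lt1[OF assms(3,4)] unfolding us'_def s'_def .
  have u0: "0 \<le> us'" unfolding us'_def using s sq_lt[of s'] by simp
  define K where "K = p * (us' - us) + qfun t * (vs' - vs)"
  have "K = (h' - h) * (1 - us')" unfolding K_def using e1 e2 by (simp add: algebra_simps)
  moreover have "\<bar>h' - h\<bar> * (1 - us') \<le> \<bar>h' - h\<bar> * 1"
    using u0 u1 by (intro mult_left_mono) auto
  ultimately have Kb: "\<bar>K\<bar> \<le> \<bar>h' - h\<bar>" using u0 u1 by (simp add: abs_mult)
  have sq: "s\<^sup>2 < \<beta>\<^sup>2" "s'\<^sup>2 < \<beta>\<^sup>2" using sq_lt s by auto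
  show ?thesis
  proof (cases "s \<le> s'")
    case True
    have "s' - s \<le> us' - us" unfolding us_def us'_def using u_diff[of s s'] s True by simp
    moreover have "0 \<le> vs' - vs" unfolding vs_def vs'_def using u_le[of s s' "\<beta>\<^sup>2"] s True sq by simp
    ultimately have "h * (s' - s) \<le> p * (us' - us)" using p assms True
      by (intro mult_mono) auto
    moreover have "0 \<le> qfun t * (vs' - vs)" using qpos \<open>0 \<le> vs' - vs\<close> by simp
    ultimately have "h * (s' - s) \<le> K" unfolding K_def by linarith
    then show ?thesis using Kb True unfolding s_def s'_def by simp
  next
    case False
    have "s - s' \<le> us - us'" unfolding us_def us'_def using u_diff[of s' s] s False by simp
    moreover have "0 \<le> vs - vs'" unfolding vs_def vs'_def using u_le[of s' s "\<beta>\<^sup>2"] s False sq by simp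
    ultimately have "h * (s - s') \<le> p * (us - us')" using p assms False
      by (intro mult_mono) auto
    moreover have "0 \<le> qfun t * (vs - vs')" using qpos \<open>0 \<le> vs - vs'\<close> by simp
    ultimately have "h * (s - s') \<le> - K" unfolding K_def by (simp add: algebra_simps)
    then show ?thesis using Kb False unfolding s_def s'_def by simp
  qed
qed

lemma sig_tendsto:
  assumes "0 < h" "h \<le> 1"
  shows "(sig \<longlongrightarrow> sig h) (at h within {0<..1})"
proof (rule LIM_zero_cancel, rule Lim_null_comparison)
  show "\<forall>\<^sub>F y in at h within {0<..1}. norm (sig y - sig h) \<le> \<bar>y - h\<bar> / h"
    unfolding eventually_at_filter
  proof (rule always_eventually, intro allI impI)
    fix y assume "y \<noteq> h" "y \<in> {0<..1::real}"
    then have "h * \<bar>sig y - sig h\<bar> \<le> \<bar>y - h\<bar>" using sig_lip[of h y] assms by auto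
    then show "norm (sig y - sig h) \<le> \<bar>y - h\<bar> / h" using assms by (simp add: le_divide_eq mult.commute)
  qed
  have "((\<lambda>y. y - h) \<longlongrightarrow> 0) (at h within {0<..1})"
    by (rule LIM_zero) (rule tendsto_ident_at)
  then show "((\<lambda>y. \<bar>y - h\<bar> / h) \<longlongrightarrow> 0) (at h within {0<..1})"
    by (intro tendsto_divide_zero tendsto_rabs_zero)
qed

lemma main:
  shows "strict_convex_on {0<..1} (\<lambda>h. l_tilde t \<beta> h)
       \<and> antimono_on {0<..1} (\<lambda>h. l_tilde t \<beta> h)
       \<and> (\<forall>h\<in>{0<..1}. ((\<lambda>h. l_tilde t \<beta> h) has_real_derivative
             (sqrt (1 - (sigma_tilde t \<beta> h)\<^sup>2) + sigma_tilde t \<beta> h - sqrt 2))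
             (at h within {0<..1}))"
proof (intro conjI)
  have lt: "\<And>h. l_tilde t \<beta> h = Mf h - t - h * sqrt 2" by (simp add: l_tilde_def Let_def)
  note SP = sig_props
  show "strict_convex_on {0<..1} (\<lambda>h. l_tilde t \<beta> h)"
    unfolding strict_convex_on_def
  proof (intro conjI ballI allI impI)
    show "convex {0<..1::real}" by simp
    fix x y u :: real
    assume x: "x \<in> {0<..1}" and y: "y \<in> {0<..1}" and xyu: "x \<noteq> y \<and> 0 < u \<and> u < 1"
    define z where "z = u * x + (1 - u) * y"
    have "0 < u * x" "0 < (1 - u) * y" using x y xyu by auto
    then have z0: "0 < z" unfolding z_def by linarith
    have "u * x \<le> u" using mult_left_mono[of x 1 u] x xyu by simp
    moreover have "(1 - u) * y \<le> 1 - u" using mult_left_mono[of y 1 "1 - u"] y xyu by simp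
    ultimately have "u * x + (1 - u) * y \<le> 1" by linarith
    then have z1: "z \<le> 1" unfolding z_def by linarith
    have "z - x = (1 - u) * (y - x)" unfolding z_def by (simp add: algebra_simps)
    moreover have "(1 - u) * (y - x) \<noteq> 0" using xyu by simp
    ultimately have "z \<noteq> x" by auto
    then have ne: "sig z \<noteq> sig x" using sig_inj[of z x] z0 z1 x by auto
    have sz: "0 \<le> sig z" "sig z \<le> 1" using SP[OF z0 z1] by auto
    have A: "Psi x (sig z) < Mf x" using Psi_le(2)[of x "sig z"] x sz ne by auto
    have B: "Psi y (sig z) \<le> Mf y" using Psi_le(1)[of y "sig z"] y sz by auto
    have "Mf z = Psi z (sig z)" using Psi_self[OF z0 z1] by simp
    also have "\<dots> = u * (Psi z (sig z) + (x - z) * cc (sig z)) + (1 - u) * (Psi z (sig z) + (y - z) * cc (sig z))"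
      unfolding z_def by (rule convex_comb[symmetric])
    also have "\<dots> = u * Psi x (sig z) + (1 - u) * Psi y (sig z)"
      by (simp only: Psi_shift[of x "sig z" z] Psi_shift[of y "sig z" z])
    also have "\<dots> < u * Mf x + (1 - u) * Mf y"
    proof -
      have "u * Psi x (sig z) < u * Mf x" using A xyu by simp
      moreover have "(1 - u) * Psi y (sig z) \<le> (1 - u) * Mf y" using B xyu by simp
      ultimately show ?thesis by linarith
    qed
    finally have "Mf z < u * Mf x + (1 - u) * Mf y" .
    then show "l_tilde t \<beta> (u * x + (1 - u) * y) < u * l_tilde t \<beta> x + (1 - u) * l_tilde t \<beta> y"
      unfolding lt convex_comb2 z_def[symmetric] by linarith
  qed
  show "antimono_on {0<..1} (\<lambda>h. l_tilde t \<beta> h)"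
  proof (rule monotone_onI)
    fix x y :: real assume x: "x \<in> {0<..1}" and y: "y \<in> {0<..1}" and xy: "x \<le> y"
    have s: "0 \<le> sig y" "sig y \<le> 1" using SP[of y] y by auto
    have "Mf y - Mf x \<le> (y - x) * cc (sig y)" using Mf_bounds(2)[of x y] x y by auto
    also have "\<dots> \<le> (y - x) * sqrt 2" using c_le[OF s] xy by (intro mult_left_mono) auto
    finally have "Mf y - Mf x \<le> (y - x) * sqrt 2" .
    moreover have "(y - x) * sqrt 2 = y * sqrt 2 - x * sqrt 2" by (simp add: left_diff_distrib)
    ultimately show "l_tilde t \<beta> y \<le> l_tilde t \<beta> x" unfolding lt by linarith
  qed
  show "\<forall>h\<in>{0<..1}. ((\<lambda>h. l_tilde t \<beta> h) has_real_derivative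
             (sqrt (1 - (sigma_tilde t \<beta> h)\<^sup>2) + sigma_tilde t \<beta> h - sqrt 2))
             (at h within {0<..1})"
  proof
    fix h :: real assume h: "h \<in> {0<..1}"
    then have h0: "0 < h" and h1: "h \<le> 1" by auto
    have cs: "isCont (\<lambda>r. cc r) (sig h)" by (intro continuous_intros)
    have "((\<lambda>y. cc (sig y)) \<longlongrightarrow> cc (sig h)) (at h within {0<..1})"
      by (rule isCont_tendsto_compose[OF cs sig_tendsto[OF h0 h1]])
    then have g: "((\<lambda>y. \<bar>cc (sig y) - cc (sig h)\<bar>) \<longlongrightarrow> 0) (at h within {0<..1})"
      by (intro tendsto_rabs_zero LIM_zero)
    have "((\<lambda>y. (l_tilde t \<beta> y - l_tilde t \<beta> h) / (y - h)) \<longlongrightarrow> cc (sig h) - sqrt 2) (at h within {0<..1})"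
    proof (rule LIM_zero_cancel, rule Lim_null_comparison[OF _ g])
      show "\<forall>\<^sub>F y in at h within {0<..1}. norm ((l_tilde t \<beta> y - l_tilde t \<beta> h) / (y - h) - (cc (sig h) - sqrt 2))
              \<le> \<bar>cc (sig y) - cc (sig h)\<bar>"
        unfolding eventually_at_filter
      proof (rule always_eventually, intro allI impI)
        fix y assume yh: "y \<noteq> h" and y: "y \<in> {0<..1::real}"
        have d: "y - h \<noteq> 0" using yh by simp
        have b1: "(y - h) * cc (sig h) \<le> Mf y - Mf h" and b2: "Mf y - Mf h \<le> (y - h) * cc (sig y)"
          using Mf_bounds[of h y] h y by auto
        have e: "l_tilde t \<beta> y - l_tilde t \<beta> h = (Mf y - Mf h) - (y - h) * sqrt 2"
          unfolding lt by (simp add: algebra_simps)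
        show "norm ((l_tilde t \<beta> y - l_tilde t \<beta> h) / (y - h) - (cc (sig h) - sqrt 2))
              \<le> \<bar>cc (sig y) - cc (sig h)\<bar>"
          unfolding e real_norm_def by (rule quot_bound[OF d b1 b2])
      qed
    qed
    then show "((\<lambda>h. l_tilde t \<beta> h) has_real_derivative
             (sqrt (1 - (sigma_tilde t \<beta> h)\<^sup>2) + sigma_tilde t \<beta> h - sqrt 2))
             (at h within {0<..1})"
      by (simp add: has_field_derivative_iff)
  qed
qed

end

theorem lemma3p17:
  fixes t \<beta> :: real
  assumes "t > 0" and "\<beta> > 1"
  shows "strict_convex_on {0<..1} (\<lambda>h. l_tilde t \<beta> h)
       \<and> antimono_on {0<..1} (\<lambda>h. l_tilde t \<beta> h)
       \<and> (\<forall>h\<in>{0<..1}. ((\<lambda>h. l_tilde t \<beta> h) has_real_derivative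
             (sqrt (1 - (sigma_tilde t \<beta> h)\<^sup>2) + sigma_tilde t \<beta> h - sqrt 2))
             (at h within {0<..1}))"
  by (rule main[OF q_props[OF assms(1)] assms(2)])

end
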